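(* Let $P_1,P_2,P_3$ be points on a circle of radius $R$, and let $P_1',P_2',P_3'$ be points in $\mathbb R^2$ with $\|P_j'-P_k'\|\ge d$ for $j\ne k$, for some $d>0$, and $\|P_j-P_j'\|\le\delta$ for $j=1,2,3$, where $\delta\ge 0$. If $$\delta<\frac{d^2}{2\left(R+d+\sqrt{(R+d)^2-d^2}\right)},$$ then the points $P_1',P_2',P_3'$ are not collinear. *)

theory Defs
  imports "HOL-Analysis.Analysis"
begin

end

theory Submission
  imports Defs
begin
lemma bound_aux:
  fixes R d \<delta> :: real
  assumes "R > 0" "d > 0" "\<delta> \<ge> 0"
    and "\<delta> < d\<^sup>2 / (2 * (R + d + sqrt ((R + d)\<^sup>2 - d\<^sup>2)))"
  shows "2*\<delta> < d" "4*R*\<delta> < (d - 2*\<delta>)^2"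
proof -
  define s where "s = sqrt ((R + d)\<^sup>2 - d\<^sup>2)"
  have s0: "s \<ge> 0" unfolding s_def using assms by simp
  have s2: "s^2 = (R+d)^2 - d^2" unfolding s_def using assms by simp
  have pos: "2*(R + d + s) > 0" using assms s0 by simp
  have dd: "d^2 = (R+d-s)*(R+d+s)" using s2 by (simp add: algebra_simps power2_eq_square)
  have "\<delta> * (2*(R+d+s)) < d^2" using assms(4) pos s_def by (simp add: pos_less_divide_eq)
  hence "(2*\<delta>) * (R+d+s) < (R+d-s)*(R+d+s)" using dd by (simp add: algebra_simps)
  hence h: "2*\<delta> < R+d-s" using pos by (simp add: mult_less_cancel_right)
  have "R^2 \<le> s^2" using s2 assms by (simp add: power2_eq_square algebra_simps)
  hence "R \<le> s" using s0 power2_le_imp_le by blast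
  thus "2*\<delta> < d" using h by linarith
  have "(d - 2*\<delta>)^2 - 4*R*\<delta> = (R+d-2*\<delta>-s)*(R+d-2*\<delta>+s)"
    using s2 by (simp add: algebra_simps power2_eq_square)
  moreover have "(R+d-2*\<delta>-s)*(R+d-2*\<delta>+s) > 0" using h s0 assms by (intro mult_pos_pos) auto
  ultimately show "4*R*\<delta> < (d - 2*\<delta>)^2" by linarith
qed

lemma core:
  fixes x1 x2 x3 y1 y2 y3 t1 t2 t3 cx cy R \<delta> g :: real
  assumes c1: "(x1-cx)^2+(y1-cy)^2 = R^2" and c2: "(x2-cx)^2+(y2-cy)^2 = R^2"
    and c3: "(x3-cx)^2+(y3-cy)^2 = R^2"
    and R: "R > 0" and g: "g > 0"
    and o1: "x2 - x1 \<ge> g" and o2: "x3 - x2 \<ge> g"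
    and "\<bar>y1\<bar> \<le> \<delta>" "\<bar>y2\<bar> \<le> \<delta>" "\<bar>y3\<bar> \<le> \<delta>"
  shows "g^2 \<le> 4*R*\<delta>"
proof -
  define K where "K = (x2-x1)*(y3-y1) - (x3-x1)*(y2-y1)"
  define A where "A = (x1-x2)^2+(y1-y2)^2"
  define B where "B = (x2-x3)^2+(y2-y3)^2"
  define Cc where "Cc = (x1-x3)^2+(y1-y3)^2"
  have id: "A*B*Cc = 4*R^2*K^2" unfolding A_def B_def Cc_def K_def using c1 c2 c3 by algebra
  have K': "K = (x2-x1)*(y3-y2) - (x3-x2)*(y2-y1)" unfolding K_def by algebra
  have "\<bar>(x2-x1)*(y3-y2)\<bar> \<le> (x2-x1)*(2*\<delta>)"
    using o1 g assms(8-10) by (simp add: abs_mult mult_left_mono)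
  moreover have "\<bar>(x3-x2)*(y2-y1)\<bar> \<le> (x3-x2)*(2*\<delta>)"
    using o2 g assms(8-10) by (simp add: abs_mult mult_left_mono)
  ultimately have Kb: "\<bar>K\<bar> \<le> 2*\<delta>*(x3-x1)" unfolding K' by (simp add: algebra_simps) 
  have "\<delta> \<ge> 0" using assms(8) by simp
  have Ag: "A \<ge> g^2" unfolding A_def using o1 g
    by (smt (verit) power2_le_iff_abs_le power2_commute zero_le_power2)
  have Bg: "B \<ge> g^2" unfolding B_def using o2 g
    by (smt (verit) power2_le_iff_abs_le power2_commute zero_le_power2)
  have Cx: "Cc \<ge> (x3-x1)^2" unfolding Cc_def by (simp add: power2_commute)
  have x31: "x3 - x1 > 0" using o1 o2 g by linarith
  have Cpos: "Cc > 0" using Cx x31 by (smt (verit) zero_less_power2)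
  have "K^2 \<le> (2*\<delta>*(x3-x1))^2" using Kb by (metis abs_le_square_iff abs_of_nonneg dual_order.trans abs_ge_zero)
  hence "4*R^2*K^2 \<le> 4*R^2*(2*\<delta>*(x3-x1))^2" using R by simp
  also have "\<dots> = 16*R^2*\<delta>^2*(x3-x1)^2" by (simp add: power_mult_distrib)
  also have "\<dots> \<le> 16*R^2*\<delta>^2*Cc" using Cx by (simp add: mult_left_mono)
  finally have "A*B*Cc \<le> 16*R^2*\<delta>^2*Cc" using id by simp
  moreover have "g^2*g^2*Cc \<le> A*B*Cc"
  proof -
    have "A \<ge> 0" by (rule order_trans[OF zero_le_power2 Ag])
    hence "g^2*g^2 \<le> A*B" using Ag Bg by (intro mult_mono) auto
    thus ?thesis using Cpos by (simp add: mult_right_mono)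
  qed
  ultimately have "(g^2)^2 * Cc \<le> (4*R*\<delta>)^2 * Cc"
    by (simp add: power2_eq_square algebra_simps)
  hence "(g^2)^2 \<le> (4*R*\<delta>)^2" using Cpos by simp
  moreover have "4*R*\<delta> \<ge> 0" using R \<open>\<delta> \<ge> 0\<close> by simp
  ultimately show ?thesis by (rule power2_le_imp_le)
qed
lemma ordered:
  fixes x1 x2 x3 y1 y2 y3 t1 t2 t3 cx cy R d \<delta> :: real
  assumes c1: "(x1-cx)^2+(y1-cy)^2 = R^2" and c2: "(x2-cx)^2+(y2-cy)^2 = R^2"
    and c3: "(x3-cx)^2+(y3-cy)^2 = R^2"
    and n1: "\<bar>x1-t1\<bar> \<le> \<delta>" "\<bar>y1\<bar> \<le> \<delta>"
    and n2: "\<bar>x2-t2\<bar> \<le> \<delta>" "\<bar>y2\<bar> \<le> \<delta>"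
    and n3: "\<bar>x3-t3\<bar> \<le> \<delta>" "\<bar>y3\<bar> \<le> \<delta>"
    and s: "\<bar>t1-t2\<bar> \<ge> d" "\<bar>t2-t3\<bar> \<ge> d"
    and o: "t1 \<le> t2" "t2 \<le> t3"
    and R: "R > 0" and d: "d > 0" and "\<delta> \<ge> 0"
    and b: "\<delta> < d\<^sup>2 / (2 * (R + d + sqrt ((R + d)\<^sup>2 - d\<^sup>2)))"
  shows False
proof -
  have b1: "2*\<delta> < d" and b2: "4*R*\<delta> < (d - 2*\<delta>)^2" using bound_aux[OF R d \<open>\<delta> \<ge> 0\<close> b] by auto
  have "(d - 2*\<delta>)^2 \<le> 4*R*\<delta>"
    by (rule core[OF c1 c2 c3 R, of "d - 2*\<delta>"]) (use b1 n1 n2 n3 s o in auto)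
  thus False using b2 by simp
qed

lemma real_main:
  fixes x1 x2 x3 y1 y2 y3 t1 t2 t3 cx cy R d \<delta> :: real
  assumes c1: "(x1-cx)^2+(y1-cy)^2 = R^2" and c2: "(x2-cx)^2+(y2-cy)^2 = R^2"
    and c3: "(x3-cx)^2+(y3-cy)^2 = R^2"
    and n1: "\<bar>x1-t1\<bar> \<le> \<delta>" "\<bar>y1\<bar> \<le> \<delta>"
    and n2: "\<bar>x2-t2\<bar> \<le> \<delta>" "\<bar>y2\<bar> \<le> \<delta>"
    and n3: "\<bar>x3-t3\<bar> \<le> \<delta>" "\<bar>y3\<bar> \<le> \<delta>"
    and s: "\<bar>t1-t2\<bar> \<ge> d" "\<bar>t2-t3\<bar> \<ge> d" "\<bar>t1-t3\<bar> \<ge> d"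
    and R: "R > 0" and d: "d > 0" and dl: "\<delta> \<ge> 0"
    and b: "\<delta> < d\<^sup>2 / (2 * (R + d + sqrt ((R + d)\<^sup>2 - d\<^sup>2)))"
  shows False
proof -
  have s': "\<bar>t2-t1\<bar> \<ge> d" "\<bar>t3-t2\<bar> \<ge> d" "\<bar>t3-t1\<bar> \<ge> d" using s by (simp_all add: abs_minus_commute)
  consider "t1 \<le> t2" "t2 \<le> t3" | "t1 \<le> t3" "t3 \<le> t2" | "t2 \<le> t1" "t1 \<le> t3"
    | "t2 \<le> t3" "t3 \<le> t1" | "t3 \<le> t1" "t1 \<le> t2" | "t3 \<le> t2" "t2 \<le> t1" by linarith
  then show False
  proof cases
    case 1 show False by (rule ordered[OF c1 c2 c3 n1 n2 n3 _ _ 1 R d dl b]) (use s s' in auto)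
  next
    case 2 show False by (rule ordered[OF c1 c3 c2 n1 n3 n2 _ _ 2 R d dl b]) (use s s' in auto)
  next
    case 3 show False by (rule ordered[OF c2 c1 c3 n2 n1 n3 _ _ 3 R d dl b]) (use s s' in auto)
  next
    case 4 show False by (rule ordered[OF c2 c3 c1 n2 n3 n1 _ _ 4 R d dl b]) (use s s' in auto)
  next
    case 5 show False by (rule ordered[OF c3 c1 c2 n3 n1 n2 _ _ 5 R d dl b]) (use s s' in auto)
  next
    case 6 show False by (rule ordered[OF c3 c2 c1 n3 n2 n1 _ _ 6 R d dl b]) (use s s' in auto)
  qed
qed

definition rot :: "real^2 \<Rightarrow> real^2" where "rot u = vector [-(u$2), u$1]"

lemma norm2_comp: "(norm (a::real^2))^2 = (a$1)^2 + (a$2)^2"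
  unfolding power2_norm_eq_inner by (simp add: inner_vec_def sum_2 power2_eq_square)

lemma dist_decomp:
  fixes a u :: "real^2"
  assumes "norm u = 1"
  shows "(norm a)^2 = (inner a u)^2 + (inner a (rot u))^2"
proof -
  have u: "(u$1)^2 + (u$2)^2 = 1" using assms norm2_comp[of u] by simp
  have "(inner a u)^2 + (inner a (rot u))^2 = ((a$1)^2 + (a$2)^2) * ((u$1)^2 + (u$2)^2)"
    by (simp add: inner_vec_def sum_2 rot_def power2_eq_square algebra_simps)
  thus ?thesis using u norm2_comp[of a] by simp
qed

lemma inner_rot: "inner u (rot u) = 0"
  by (simp add: inner_vec_def sum_2 rot_def)
theorem lemma7p4:
  fixes C P1 P2 P3 Q1 Q2 Q3 :: "real ^ 2" and R d \<delta> :: real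
  assumes "R > 0"
    and "dist P1 C = R" and "dist P2 C = R" and "dist P3 C = R"
    and "d > 0"
    and "dist Q1 Q2 \<ge> d" and "dist Q1 Q3 \<ge> d" and "dist Q2 Q3 \<ge> d"
    and "\<delta> \<ge> 0"
    and "dist P1 Q1 \<le> \<delta>" and "dist P2 Q2 \<le> \<delta>" and "dist P3 Q3 \<le> \<delta>"
    and "\<delta> < d\<^sup>2 / (2 * (R + d + sqrt ((R + d)\<^sup>2 - d\<^sup>2)))"
  shows "\<not> collinear {Q1, Q2, Q3}"
proof
  assume "collinear {Q1, Q2, Q3}"
  then obtain w where w: "\<forall>x\<in>{Q1,Q2,Q3}. \<forall>y\<in>{Q1,Q2,Q3}. \<exists>c. x - y = c *\<^sub>R w"
    unfolding collinear_def by blast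
  obtain c1 where wc1: "Q1 - Q2 = c1 *\<^sub>R w" using w by blast
  obtain c3 where wc3: "Q3 - Q2 = c3 *\<^sub>R w" using w by blast
  have "Q1 \<noteq> Q2" using assms(5,6) by auto
  hence w0: "w \<noteq> 0" using wc1 by auto
  define u where "u = w /\<^sub>R norm w"
  have nu: "norm u = 1" unfolding u_def using w0 by simp
  define n where "n = rot u"
  have wn: "inner w n = 0" unfolding n_def u_def
    using inner_rot[of "w /\<^sub>R norm w"] w0 by (simp add: rot_def inner_vec_def sum_2)
  define fx where "fx X = inner (X - Q2) u" for X
  define fy where "fy X = inner (X - Q2) n" for X
  have dd: "(dist X Y)^2 = (fx X - fx Y)^2 + (fy X - fy Y)^2" for X Y
  proof -
    have "(dist X Y)^2 = (inner (X - Y) u)^2 + (inner (X - Y) n)^2"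
      unfolding dist_norm n_def by (rule dist_decomp[OF nu])
    moreover have "X - Y = (X - Q2) - (Y - Q2)" by simp
    ultimately show ?thesis unfolding fx_def fy_def by (metis inner_diff_left)
  qed
  have fy1: "fy Q1 = 0" unfolding fy_def wc1 using wn by simp
  have fy2: "fy Q2 = 0" unfolding fy_def by simp
  have fy3: "fy Q3 = 0" unfolding fy_def wc3 using wn by simp
  have circ: "(fx P - fx C)^2 + (fy P - fy C)^2 = R^2" if "dist P C = R" for P
    using dd[of P C] that by simp
  have near: "\<bar>fx P - fx Q\<bar> \<le> \<delta> \<and> \<bar>fy P\<bar> \<le> \<delta>" if "dist P Q \<le> \<delta>" "fy Q = 0" for P Q
  proof -
    have "(dist P Q)^2 \<le> \<delta>^2" using that(1) by (simp add: power_mono)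
    hence h: "(fx P - fx Q)^2 + (fy P)^2 \<le> \<delta>^2" using dd[of P Q] that(2) by simp
    have "(fx P - fx Q)^2 \<le> \<delta>^2" "(fy P)^2 \<le> \<delta>^2" using h by (smt (verit) zero_le_power2)+
    thus ?thesis using \<open>\<delta> \<ge> 0\<close> by (metis abs_le_square_iff abs_of_nonneg)
  qed
  have sep: "\<bar>fx Q - fx Q'\<bar> \<ge> d" if "dist Q Q' \<ge> d" "fy Q = 0" "fy Q' = 0" for Q Q'
  proof -
    have "d^2 \<le> (dist Q Q')^2" using that(1) \<open>d > 0\<close> by (simp add: power_mono)
    hence "d^2 \<le> (fx Q - fx Q')^2" using dd[of Q Q'] that(2,3) by simp
    thus ?thesis using \<open>d > 0\<close> by (metis abs_le_square_iff abs_of_pos)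
  qed
  show False
    apply (rule real_main[OF circ[OF assms(2)] circ[OF assms(3)] circ[OF assms(4)]
        conjunct1[OF near[OF assms(10) fy1]] conjunct2[OF near[OF assms(10) fy1]]
        conjunct1[OF near[OF assms(11) fy2]] conjunct2[OF near[OF assms(11) fy2]]
        conjunct1[OF near[OF assms(12) fy3]] conjunct2[OF near[OF assms(12) fy3]]
        sep[OF assms(6) fy1 fy2] sep[OF assms(8) fy2 fy3] sep[OF assms(7) fy1 fy3]
        assms(1) assms(5) assms(9) assms(13)])
    done
qed
end
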